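(* Let $i\in\{1,\ldots,n\}$ and suppose that for every $j\in\{1,\ldots,i\}$ the implication $$\hat F(\mathbf{1}^j,\mathbf{X}_{j+1}^n,\mathbf{1}^j,\overline{\mathbf{X}}_{j+1}^n,\mathbf{Y})\Rightarrow \hat F(\mathbf{1}^{j-1}0,\mathbf{X}_{j+1}^n,\mathbf{1}^{j-1}1,\overline{\mathbf{X}}_{j+1}^n,\mathbf{Y})\vee \hat F(\mathbf{1}^{j-1}1,\mathbf{X}_{j+1}^n,\mathbf{1}^{j-1}0,\overline{\mathbf{X}}_{j+1}^n,\mathbf{Y})$$ is valid (for all values of $\mathbf{X}_{j+1}^n,\overline{\mathbf{X}}_{j+1}^n,\mathbf{Y}$). Then $\exists\mathbf{X}_1^i\,F(\mathbf{X},\mathbf{Y})\Leftrightarrow \hat F(\mathbf{1}^i,\mathbf{X}_{i+1}^n,\mathbf{1}^i,\neg\mathbf{X}_{i+1}^n,\mathbf{Y})$.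
   Context: $\mathbf{X}=(x_1,\ldots,x_n)$ are outputs and $\mathbf{Y}=(y_1,\ldots,y_m)$ inputs; $\mathbf{X}_i^j=(x_i,\ldots,x_j)$. An NNF formula uses only $\wedge,\vee$ and negations applied to variables, represented as a DAG with $\wedge/\vee$ internal nodes and literal leaves. Given a fixed NNF DAG for $F(\mathbf{X},\mathbf{Y})$, $\hat F(\mathbf{X},\overline{\mathbf{X}},\mathbf{Y})$ is obtained by replacing each leaf $\neg x_i$ ($x_i\in\mathbf{X}$) by a fresh variable $\overline{x_i}$, $\overline{\mathbf{X}}=(\overline{x_1},\ldots,\overline{x_n})$. For bit-vectors $\mathbf{b},\mathbf{c}$ of length $j$, $\hat F(\mathbf{b},\mathbf{X}_{j+1}^n,\mathbf{c},\overline{\mathbf{X}}_{j+1}^n,\mathbf{Y})$ denotes $\hat F$ with $(x_1,\ldots,x_j):=\mathbf{b}$ and $(\overline{x_1},\ldots,\overline{x_j}):=\mathbf{c}$; writing $\neg\mathbf{X}_{j+1}^n$ in place of $\overline{\mathbf{X}}_{j+1}^n$ means $\overline{x_k}:=\neg x_k$ for $k>j$. $\mathbf{1}^{j-1}0$ is the length-$j$ vector with $j-1$ ones followed by a $0$ (similarly $\mathbf{1}^{j-1}1=\mathbf{1}^j$), and $\mathbf{1}^j$ the all-ones vector of length $j$. *)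

theory Defs
  imports Main
begin

datatype var = XV nat | YV nat

(* NNF formulas: literal leaves (polarity True = positive, False = negated),
   internal conjunction / disjunction nodes of arbitrary fan-in.
   (The DAG of the paper is unfolded into a tree; semantics coincide.) *)
datatype nnf = Lit bool var | And "nnf list" | Or "nnf list"

fun xvars :: "nnf \<Rightarrow> nat set" where
  "xvars (Lit p (XV k)) = {k}"
| "xvars (Lit p (YV k)) = {}"
| "xvars (And fs) = (\<Union>f\<in>set fs. xvars f)"
| "xvars (Or fs) = (\<Union>f\<in>set fs. xvars f)"

definition wf_nnf :: "nat \<Rightarrow> nnf \<Rightarrow> bool" where
  "wf_nnf n F \<longleftrightarrow> xvars F \<subseteq> {1..n}"

fun eval :: "(nat \<Rightarrow> bool) \<Rightarrow> (nat \<Rightarrow> bool) \<Rightarrow> nnf \<Rightarrow> bool" where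
  "eval x y (Lit p (XV k)) = (if p then x k else \<not> x k)"
| "eval x y (Lit p (YV k)) = (if p then y k else \<not> y k)"
| "eval x y (And fs) = (\<forall>f\<in>set fs. eval x y f)"
| "eval x y (Or fs) = (\<exists>f\<in>set fs. eval x y f)"

(* Semantics of \<hat>F(X, Xbar, Y): each leaf \<not>x_k is replaced by the fresh variable xbar_k *)
fun evalhat :: "(nat \<Rightarrow> bool) \<Rightarrow> (nat \<Rightarrow> bool) \<Rightarrow> (nat \<Rightarrow> bool) \<Rightarrow> nnf \<Rightarrow> bool" where
  "evalhat x xb y (Lit p (XV k)) = (if p then x k else xb k)"
| "evalhat x xb y (Lit p (YV k)) = (if p then y k else \<not> y k)"
| "evalhat x xb y (And fs) = (\<forall>f\<in>set fs. evalhat x xb y f)"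
| "evalhat x xb y (Or fs) = (\<exists>f\<in>set fs. evalhat x xb y f)"

definition ones :: "nat \<Rightarrow> (nat \<Rightarrow> bool) \<Rightarrow> nat \<Rightarrow> bool" where
  "ones j x = (\<lambda>k. if k \<le> j then True else x k)"

definition ones_zero :: "nat \<Rightarrow> (nat \<Rightarrow> bool) \<Rightarrow> nat \<Rightarrow> bool" where
  "ones_zero j x = (\<lambda>k. if k < j then True else if k = j then False else x k)"

end

theory Submission
  imports Defs
begin

lemma eval_hat: "eval x y F = evalhat x (\<lambda>k. \<not> x k) y F"
  by (induction x y F rule: eval.induct) auto

lemma hat_mono: "evalhat x xb y F \<Longrightarrow> (\<forall>k. x k \<longrightarrow> x2 k) \<Longrightarrow> (\<forall>k. xb k \<longrightarrow> xb2 k)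
   \<Longrightarrow> evalhat x2 xb2 y F"
  by (induction x xb y F rule: evalhat.induct) (auto split: if_splits)

lemma hat_cong: "(\<forall>k\<in>xvars F. x k = x2 k \<and> xb k = xb2 k) \<Longrightarrow> evalhat x xb y F = evalhat x2 xb2 y F"
  by (induction x xb y F rule: evalhat.induct) auto

theorem theorem2:
  fixes F :: nnf and n i :: nat
  assumes wf: "wf_nnf n F"
    and i: "1 \<le> i" "i \<le> n"
    and hyp: "\<forall>j\<in>{1..i}. \<forall>x xb y.
       evalhat (ones j x) (ones j xb) y F \<longrightarrow>
         evalhat (ones_zero j x) (ones j xb) y F \<or> evalhat (ones j x) (ones_zero j xb) y F"
  shows "\<forall>x y. (\<exists>x'. (\<forall>k. i < k \<longrightarrow> x' k = x k) \<and> eval x' y F) \<longleftrightarrow>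
                evalhat (ones i x) (ones i (\<lambda>k. \<not> x k)) y F"
proof (intro allI iffI)
  fix x y
  assume "\<exists>x'. (\<forall>k. i < k \<longrightarrow> x' k = x k) \<and> eval x' y F"
  then obtain x' where a: "\<forall>k. i < k \<longrightarrow> x' k = x k" and e: "eval x' y F" by blast
  from e have "evalhat x' (\<lambda>k. \<not> x' k) y F" by (simp add: eval_hat)
  then show "evalhat (ones i x) (ones i (\<lambda>k. \<not> x k)) y F"
    by (rule hat_mono) (use a in \<open>auto simp: ones_def\<close>)
next
  fix x y
  assume h: "evalhat (ones i x) (ones i (\<lambda>k. \<not> x k)) y F"
  have step: "m \<le> i \<Longrightarrow> \<exists>a ab. evalhat (ones (i-m) a) (ones (i-m) ab) y F \<and>
      (\<forall>k>i-m. ab k = (\<not> a k)) \<and> (\<forall>k>i. a k = x k)" for m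
  proof (induction m)
    case 0
    then show ?case using h by (intro exI[of _ x] exI[of _ "\<lambda>k. \<not> x k"]) auto
  next
    case (Suc m)
    then obtain a ab where A: "evalhat (ones (i-m) a) (ones (i-m) ab) y F"
      and B: "\<forall>k>i-m. ab k = (\<not> a k)" and C: "\<forall>k>i. a k = x k" by auto
    define j where "j = i - m"
    have j: "j \<in> {1..i}" "i - Suc m = j - 1" using Suc.prems by (auto simp: j_def)
    from hyp j(1) A have "evalhat (ones_zero j a) (ones j ab) y F \<or> evalhat (ones j a) (ones_zero j ab) y F"
      unfolding j_def by blast
    then show ?case
    proof
      assume H: "evalhat (ones_zero j a) (ones j ab) y F"
      have e1: "ones_zero j a = ones (j-1) (a(j:=False))" "ones j ab = ones (j-1) (ab(j:=True))"
        using j by (auto simp: ones_zero_def ones_def fun_eq_iff)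
      have "evalhat (ones (i - Suc m) (a(j:=False))) (ones (i - Suc m) (ab(j:=True))) y F"
        using H unfolding e1 j(2) .
      moreover have "\<forall>k>i - Suc m. (ab(j:=True)) k = (\<not> (a(j:=False)) k)"
        using B j unfolding j_def by auto
      moreover have "\<forall>k>i. (a(j:=False)) k = x k" using C j by auto
      ultimately show ?case by blast
    next
      assume H: "evalhat (ones j a) (ones_zero j ab) y F"
      have e1: "ones j a = ones (j-1) (a(j:=True))" "ones_zero j ab = ones (j-1) (ab(j:=False))"
        using j by (auto simp: ones_zero_def ones_def fun_eq_iff)
      have "evalhat (ones (i - Suc m) (a(j:=True))) (ones (i - Suc m) (ab(j:=False))) y F"
        using H unfolding e1 j(2) .
      moreover have "\<forall>k>i - Suc m. (ab(j:=False)) k = (\<not> (a(j:=True)) k)"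
        using B j unfolding j_def by auto
      moreover have "\<forall>k>i. (a(j:=True)) k = x k" using C j by auto
      ultimately show ?case by blast
    qed
  qed
  from step[of i] obtain a ab where A: "evalhat (ones 0 a) (ones 0 ab) y F"
      and B: "\<forall>k>0. ab k = (\<not> a k)" and C: "\<forall>k>i. a k = x k" by auto
  have c: "\<forall>k\<in>xvars F. ones 0 a k = a k \<and> ones 0 ab k = (\<not> a k)"
  proof
    fix k assume "k \<in> xvars F"
    then have "k > 0" using wf by (auto simp: wf_nnf_def)
    then show "ones 0 a k = a k \<and> ones 0 ab k = (\<not> a k)" using B by (simp add: ones_def)
  qed
  have "evalhat a (\<lambda>k. \<not> a k) y F"
    using A hat_cong[OF c] by simp
  then show "\<exists>x'. (\<forall>k. i < k \<longrightarrow> x' k = x k) \<and> eval x' y F"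
    using C by (auto simp: eval_hat)
qed

end
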